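(* Let $n\ge 2$ and let $f$ be the function on $\mathbb{F}_{2^n}$ defined by $f(0)=1$, $f(1)=0$ and $f(x)=x^{-1}$ for $x\notin\{0,1\}$. For $a,b\in\mathbb{F}_{2^n}$ let $\nabla_f(a,b)$ be the number of $x\in\mathbb{F}_{2^n}$ with $f(x+a+b)+f(x+a)+f(x+b)+f(x)=0$, and for $i\in\{0,4,8\}$ let $\omega_i$ be the number of pairs $(a,b)\in\mathbb{F}_{2^n}\times\mathbb{F}_{2^n}$ with $ab(a+b)\neq 0$ and $\nabla_f(a,b)=i$. Then $\omega_8=6$ if $3\mid n$ and $\omega_8=0$ if $3\nmid n$; \[ \omega_4=\begin{cases}2^{n+1}-14,& 2\mid n,\ 3\mid n,\\ 2^{n+1}-2,& 2\mid n,\ 3\nmid n,\\ 2^{n+1}-16,& 2\nmid n,\ 3\mid n,\\ 2^{n+1}-4,& 2\nmid n,\ 3\nmid n;\end{cases} \qquad \omega_0=\begin{cases}2^{2n}-5\cdot2^n+10,& 2\mid n,\ 3\mid n,\\ 2^{2n}-5\cdot2^n+4,& 2\mid n,\ 3\nmid n,\\ 2^{2n}-5\cdot2^n+12,& 2\nmid n,\ 3\mid n,\\ 2^{2n}-5\cdot2^n+6,& 2\nmid n,\ 3\nmid n.\end{cases} \]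
   Context: This is the second-order zero differential spectrum of $Inv\circ(0,1)$, where $Inv(x)=x^{2^n-2}$ and $(0,1)$ is the transposition swapping $0$ and $1$. Pairs with $ab(a+b)=0$ (for which $\nabla_f(a,b)=2^n$) are not counted in the $\omega_i$. *)

theory Defs
  imports Main
begin

definition inv_swap01 :: "'a::field \<Rightarrow> 'a" where
  "inv_swap01 x = (if x = 0 then 1 else if x = 1 then 0 else inverse x)"

definition nabla :: "('a::{finite,comm_ring_1} \<Rightarrow> 'a) \<Rightarrow> 'a \<Rightarrow> 'a \<Rightarrow> nat" where
  "nabla f a b = card {x. f (x + a + b) + f (x + a) + f (x + b) + f x = 0}"

definition omega :: "('a::{finite,comm_ring_1} \<Rightarrow> 'a) \<Rightarrow> nat \<Rightarrow> nat" where
  "omega f i = card {(a, b). a * b * (a + b) \<noteq> 0 \<and> nabla f a b = i}"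

end

theory Submission
  imports Defs "HOL-Computational_Algebra.Polynomial"
begin


lemma c2_numeral:
  assumes two: "(2::'a::comm_ring_1) = 0"
  shows "(numeral (Num.Bit0 k) :: 'a) = 0" "(numeral (Num.Bit1 k) :: 'a) = 1"
proof -
  have "(numeral (Num.Bit0 k) :: 'a) = numeral k + numeral k" by (rule numeral_Bit0)
  also have "\<dots> = 2 * numeral k" by (rule mult_2[symmetric])
  also have "\<dots> = 0" by (simp only: two mult_zero_left)
  finally show z: "(numeral (Num.Bit0 k) :: 'a) = 0" .
  have "(numeral (Num.Bit1 k) :: 'a) = numeral k + numeral k + 1" by (rule numeral_Bit1)
  also have "\<dots> = numeral (Num.Bit0 k) + 1" by (simp only: numeral_Bit0)
  also have "\<dots> = 0 + 1" by (rule arg_cong[where f="\<lambda>u. u + 1"], rule z)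
  finally show "(numeral (Num.Bit1 k) :: 'a) = 1" by (simp only: add_0_left)
qed

lemma c2_add: assumes two: "(2::'a::comm_ring_1) = 0" shows "(x::'a) + x = 0" "x + (x + y) = y"
proof -
  have "x + x = 2 * x" by (rule mult_2[symmetric])
  thus xx: "x + x = 0" by (simp only: two mult_zero_left)
  have "x + (x + y) = (x + x) + y" by (rule add.assoc[symmetric])
  thus "x + (x + y) = y" by (simp only: xx add_0_left)
qed

lemma c2_minus: assumes two: "(2::'a::comm_ring_1) = 0" shows "- (x::'a) = x"
  using c2_add(1)[OF two, of x] by (simp add: add_eq_0_iff)

lemma c2_eq: assumes two: "(2::'a::comm_ring_1) = 0" shows "((x::'a) = y) = (x + y = 0)"
proof
  assume "x = y" thus "x + y = 0" using c2_add(1)[OF two, of x] by simp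
next
  assume h: "x + y = 0"
  have "y = x + (x + y)" using c2_add(2)[OF two, of x y] by simp
  thus "x = y" using h by simp
qed

lemma inv3_gen:
  assumes "a \<noteq> 0" "b \<noteq> 0" "c \<noteq> 0"
  shows "inverse c + inverse a + inverse (b::'a::field) = (a*b + b*c + a*c) / (a * b * c)"
  using assms by (simp add: field_simps)

lemma inv4_gen:
  assumes "x \<noteq> 0" "y \<noteq> 0" "z \<noteq> 0" "w \<noteq> 0"
  shows "x*y*z*w*(inverse w + inverse y + inverse z + inverse (x::'a::field)) = x*y*z + x*z*w + x*y*w + y*z*w"
  using assms by (simp add: field_simps)

lemma inv3:
  assumes two: "(2::'a::field) = 0" and "a \<noteq> 0" "b \<noteq> 0" "a + b \<noteq> 0"
  shows "inverse (a + b) + inverse a + inverse (b::'a) = (a*a + a*b + b*b) / (a * b * (a + b))"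
proof -
  have "a*b + b*(a+b) + a*(a+b) = a*a + a*b + b*b"
    by (simp add: algebra_simps c2_numeral[OF two] c2_minus[OF two])
  thus ?thesis using inv3_gen[OF assms(2,3,4)] by simp
qed

lemma inv3b:
  assumes two: "(2::'a::field) = 0" and "1 + a \<noteq> 0" "1 + b \<noteq> 0" "1 + a + b \<noteq> 0"
  shows "inverse (1 + a + b) + inverse (1 + a) + inverse (1 + (b::'a)) =
     (a*a + a*b + b*b + 1) / ((1 + a) * (1 + b) * (1 + a + b))"
proof -
  have "(1+a)*(1+b) + (1+b)*(1+a+b) + (1+a)*(1+a+b) = a*a + a*b + b*b + 1"
    by (simp add: algebra_simps c2_numeral[OF two] c2_minus[OF two])
  thus ?thesis using inv3_gen[OF assms(2,3,4)] by simp
qed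

lemma noflat:
  assumes two: "(2::'a::field) = 0"
    and "a \<noteq> 0" "b \<noteq> 0" "a + b \<noteq> 0" "x \<noteq> 0" "x + a \<noteq> 0" "x + b \<noteq> 0" "x + a + b \<noteq> 0"
  shows "inverse (x + a + b) + inverse (x + a) + inverse (x + b) + inverse (x::'a) \<noteq> 0"
proof
  assume h: "inverse (x + a + b) + inverse (x + a) + inverse (x + b) + inverse (x::'a) = 0"
  have "x*(x+a)*(x+b)*(x+a+b) * (inverse (x + a + b) + inverse (x + a) + inverse (x + b) + inverse x)
     = x*(x+a)*(x+b) + x*(x+b)*(x+a+b) + x*(x+a)*(x+a+b) + (x+a)*(x+b)*(x+a+b)"
    by (rule inv4_gen) (use assms in auto)
  also have "\<dots> = a * b * (a + b)"
    by (simp add: algebra_simps c2_numeral[OF two] c2_minus[OF two])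
  finally have "a * b * (a + b) = 0" using h by simp
  thus False using assms by simp
qed

definition delta :: "'a::field \<Rightarrow> 'a" where "delta x = (if x = 0 \<or> x = 1 then 1 else 0)"

lemma f_split:
  assumes two: "(2::'a::field) = 0"
  shows "inv_swap01 (x::'a) = inverse x + delta x"
  using two by (auto simp: inv_swap01_def delta_def)

lemma NAB:
  fixes a b :: "'a::{field,finite}"
  assumes two: "(2::'a) = 0" and C: "a*b*(a+b) \<noteq> 0"
  shows "nabla inv_swap01 a b = (if a = 1 \<or> b = 1 \<or> a + b = 1 then (if a*a+a*b+b*b = 0 then 4 else 0)
          else (if a*a+a*b+b*b = a*b*(a+b) then 4 else 0) + (if a*a+a*b+b*b = 1 then 4 else 0))"
proof -
  note cs = c2_add[OF two] c2_minus[OF two] c2_numeral[OF two]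
  have a0: "a \<noteq> 0" and b0: "b \<noteq> 0" and ab0: "a + b \<noteq> 0" using C by auto
  have anb: "a \<noteq> b" using ab0 c2_add(1)[OF two, of a] by auto
  have aab: "a + b \<noteq> a" "a + b \<noteq> b" using a0 b0 by (auto simp: ac_simps cs)
  define Q where "Q = a*a+a*b+b*b"
  define Cc where "Cc = a*b*(a+b)"
  define cond where "cond = (a = 1 \<or> b = 1 \<or> a + b = 1)"
  define f where "f = (inv_swap01 :: 'a \<Rightarrow> 'a)"
  define F where "F x = f (x + a + b) + f (x + a) + f (x + b) + f x" for x
  have Fa: "F (x + a) = F x" for x
  proof -
    have e: "x + a + a + b = x + b" "x + a + a = x" by (simp_all add: add.assoc cs)
    show ?thesis unfolding F_def by (simp only: e) (simp add: ac_simps)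
  qed
  have Fb: "F (x + b) = F x" for x
  proof -
    have e: "x + b + a + b = x + a" "x + b + b = x" by (simp_all add: ac_simps cs)
    show ?thesis unfolding F_def by (simp only: e) (simp add: ac_simps)
  qed
  define V where "V = {0, a, b, a + b}"
  have Vcl: "v + w \<in> V" if "v \<in> V" "w \<in> V" for v w
    using that unfolding V_def by (auto simp: ac_simps cs)
  have FV: "F (x + v) = F x" if "v \<in> V" for x v
  proof -
    have "v = 0 \<or> v = a \<or> v = b \<or> v = a + b" using that unfolding V_def by auto
    moreover have "F (x + (a + b)) = F x" using Fa Fb by (metis add.assoc)
    ultimately show ?thesis using Fa Fb by auto
  qed
  have cV: "card V = 4" unfolding V_def using a0 b0 ab0 anb aab by auto
  have one_V: "(1 \<in> V) = cond" unfolding V_def cond_def by auto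
  have xv: "x + v \<noteq> 0 \<and> x + v \<noteq> 1" if "x \<notin> V" "x + 1 \<notin> V" "v \<in> V" for x v
  proof
    show "x + v \<noteq> 0"
    proof
      assume "x + v = 0" hence "x = v" using c2_eq[OF two] by blast
      thus False using that by simp
    qed
    show "x + v \<noteq> 1"
    proof
      assume "x + v = 1" hence "x + v + 1 = 0" using c2_eq[OF two] by blast
      hence "x + 1 + v = 0" by (simp add: ac_simps)
      hence "x + 1 = v" using c2_eq[OF two] by blast
      thus False using that by simp
    qed
  qed
  have d0: "F x \<noteq> 0" if "x \<notin> V" "x + 1 \<notin> V" for x
  proof -
    have "0 \<in> V" "a \<in> V" "b \<in> V" "a + b \<in> V" unfolding V_def by auto
    hence n: "x + 0 \<noteq> 0 \<and> x + 0 \<noteq> 1" "x + a \<noteq> 0 \<and> x + a \<noteq> 1" "x + b \<noteq> 0 \<and> x + b \<noteq> 1"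
       "x + (a + b) \<noteq> 0 \<and> x + (a + b) \<noteq> 1" using xv[OF that] by blast+
    hence n': "x \<noteq> 0 \<and> x \<noteq> 1" "x + a + b \<noteq> 0 \<and> x + a + b \<noteq> 1" by (simp_all add: add.assoc)
    have "F x = inverse (x + a + b) + inverse (x + a) + inverse (x + b) + inverse x"
      unfolding F_def f_def f_split[OF two] using n n' by (simp add: delta_def)
    also have "\<dots> \<noteq> 0" using noflat[OF two a0 b0 ab0] n n' by blast
    finally show ?thesis .
  qed
  have F0: "F 0 = Q / Cc + (if cond then 0 else 1)"
  proof -
    have "F 0 = (inverse (a + b) + inverse a + inverse b) + (delta (a + b) + delta a + delta b + delta 0)"
      unfolding F_def f_def f_split[OF two] by (simp add: ac_simps)
    also have "inverse (a + b) + inverse a + inverse b = Q / Cc"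
      unfolding Q_def Cc_def by (rule inv3[OF two a0 b0 ab0])
    also have "delta (a + b) + delta a + delta b + delta 0 = (if cond then 0 else 1)"
    proof (cases "a = 1")
      case True
      hence "b \<noteq> 1" "a + b \<noteq> 1" using anb b0 aab by auto
      thus ?thesis using True a0 b0 ab0 cs by (simp add: delta_def cond_def)
    next
      case na: False
      show ?thesis
      proof (cases "b = 1")
        case True
        hence "a + b \<noteq> 1" using a0 aab by auto
        thus ?thesis using True na a0 b0 ab0 cs by (simp add: delta_def cond_def)
      next
        case False
        thus ?thesis using na a0 b0 ab0 cs by (simp add: delta_def cond_def)
      qed
    qed
    finally show ?thesis .
  qed
  have F1: "F 1 = (Q + 1) / ((1 + a) * (1 + b) * (1 + a + b))" if nc: "\<not> cond"
  proof -
    have h: "a \<noteq> 1" "b \<noteq> 1" "a + b \<noteq> 1" using nc unfolding cond_def by auto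
    have n1: "1 + a \<noteq> 0" "1 + b \<noteq> 0" "1 + a + b \<noteq> 0"
      using h c2_eq[OF two, of a 1] c2_eq[OF two, of b 1] c2_eq[OF two, of "a+b" 1] by (auto simp: ac_simps)
    have n2: "1 + a \<noteq> 1" "1 + b \<noteq> 1" "1 + a + b \<noteq> 1" using a0 b0 ab0 by (auto simp: add.assoc)
    have "F 1 = inverse (1 + a + b) + inverse (1 + a) + inverse (1 + b)"
      unfolding F_def f_def f_split[OF two] using n1 n2 two by (simp add: delta_def)
    also have "\<dots> = (Q + 1) / ((1 + a) * (1 + b) * (1 + a + b))"
      unfolding Q_def by (rule inv3b[OF two n1])
    finally show ?thesis .
  qed
  define A0 where "A0 = (F 0 = 0)"
  define B1 where "B1 = (F 1 = 0)"
  have Sx: "F x = 0 \<longleftrightarrow> (x \<in> V \<and> A0) \<or> (x + 1 \<in> V \<and> B1)" for x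
  proof (cases "x \<in> V")
    case True
    have "F x = F 0" using FV[OF True, of 0] by simp
    moreover have "x + 1 \<in> V \<Longrightarrow> F 1 = F 0"
    proof -
      assume "x + 1 \<in> V"
      hence "x + (x + 1) \<in> V" using Vcl True by blast
      hence "1 \<in> V" by (simp add: cs)
      thus "F 1 = F 0" using FV[of 1 0] by simp
    qed
    ultimately show ?thesis using True unfolding A0_def B1_def by auto
  next
    case nV: False
    show ?thesis
    proof (cases "x + 1 \<in> V")
      case True
      have "F (1 + (x + 1)) = F 1" using FV[OF True, of 1] .
      moreover have "1 + (x + 1) = x" by (simp add: ac_simps cs)
      ultimately show ?thesis using nV True unfolding A0_def B1_def by auto
    next
      case False
      thus ?thesis using d0[OF nV False] nV unfolding A0_def B1_def by auto
    qed
  qed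
  have nab: "nabla inv_swap01 a b = card {x. F x = 0}"
    unfolding nabla_def F_def f_def ..
  have Cc0: "Cc \<noteq> 0" using C unfolding Cc_def .
  show ?thesis
  proof (cases cond)
    case True
    hence "1 \<in> V" using one_V by simp
    hence V1: "x + 1 \<in> V \<longleftrightarrow> x \<in> V" for x using Vcl[of "x+1" 1] Vcl[of x 1] by (auto simp: add.assoc cs)
    have "F 1 = F 0" using FV[OF \<open>1 \<in> V\<close>, of 0] by simp
    hence "B1 = A0" unfolding A0_def B1_def by simp
    hence "{x. F x = 0} = (if A0 then V else {})" using Sx V1 by auto
    hence "nabla inv_swap01 a b = (if A0 then 4 else 0)" using nab cV by simp
    moreover have "A0 = (Q = 0)" unfolding A0_def using F0 True Cc0 by simp
    ultimately show ?thesis using True unfolding cond_def Q_def by simp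
  next
    case False
    hence n1: "1 \<notin> V" using one_V by simp
    have img: "{x. x + 1 \<in> V} = (\<lambda>v. v + 1) ` V"
    proof
      show "{x. x + 1 \<in> V} \<subseteq> (\<lambda>v. v + 1) ` V"
      proof
        fix x assume "x \<in> {x. x + 1 \<in> V}"
        moreover have "x = (x + 1) + 1" by (simp add: add.assoc cs)
        ultimately show "x \<in> (\<lambda>v. v + 1) ` V" by blast
      qed
      show "(\<lambda>v. v + 1) ` V \<subseteq> {x. x + 1 \<in> V}" by (auto simp: add.assoc cs)
    qed
    have cimg: "card ((\<lambda>v. v + 1) ` V) = 4" using cV by (subst card_image) (auto simp: inj_on_def)
    have disj: "V \<inter> (\<lambda>v. v + 1) ` V = {}"
    proof (rule ccontr)
      assume "V \<inter> (\<lambda>v. v + 1) ` V \<noteq> {}"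
      then obtain v where "v \<in> V" "v + 1 \<in> V" by auto
      hence "v + (v + 1) \<in> V" using Vcl by blast
      thus False using n1 by (simp add: cs)
    qed
    have "{x. F x = 0} = (if A0 then V else {}) \<union> (if B1 then (\<lambda>v. v + 1) ` V else {})"
      using Sx img by auto
    hence "nabla inv_swap01 a b = (if A0 then 4 else 0) + (if B1 then 4 else 0)"
      using nab cV cimg disj by (simp add: card_Un_disjoint)
    moreover have "A0 = (Q = Cc)"
      unfolding A0_def
    proof -
      have "(F 0 = 0) = (Q / Cc + 1 = 0)" using F0 False by simp
      also have "\<dots> = (Q / Cc = 1)" using c2_eq[OF two, of "Q / Cc" 1] by simp
      also have "\<dots> = (Q = Cc)" using Cc0 by simp
      finally show "(F 0 = 0) = (Q = Cc)" .
    qed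
    moreover have "B1 = (Q = 1)"
      unfolding B1_def
    proof -
      have h: "a \<noteq> 1" "b \<noteq> 1" "a + b \<noteq> 1" using False unfolding cond_def by auto
      have "1 + a \<noteq> 0" "1 + b \<noteq> 0" "1 + a + b \<noteq> 0"
        using h c2_eq[OF two, of a 1] c2_eq[OF two, of b 1] c2_eq[OF two, of "a+b" 1] by (auto simp: ac_simps)
      hence "(F 1 = 0) = (Q + 1 = 0)" using F1[OF False] by simp
      also have "\<dots> = (Q = 1)" using c2_eq[OF two, of Q 1] by simp
      finally show "(F 1 = 0) = (Q = 1)" .
    qed
    ultimately show ?thesis using False unfolding cond_def Q_def Cc_def by simp
  qed
qed

lemma LW:
  fixes a b :: "'a::field"
  assumes two: "(2::'a) = 0" and C: "a*b*(a+b) \<noteq> 0"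
    and cond: "a = 1 \<or> b = 1 \<or> a + b = 1" and Q: "a*a+a*b+b*b = 0"
  shows "a \<in> insert 1 {x. x*x+x+1 = 0} \<and> b \<in> insert 1 {x. x*x+x+1 = 0} \<and> a \<noteq> b"
proof -
  note cs = c2_add[OF two] c2_minus[OF two] c2_numeral[OF two]
  have a0: "a \<noteq> 0" and b0: "b \<noteq> 0" and ab0: "a + b \<noteq> 0" using C by auto
  have anb: "a \<noteq> b" using ab0 c2_add(1)[OF two, of a] by auto
  have "a = 1 \<or> b = 1 \<or> (b = a + 1)"
  proof -
    { assume "a + b = 1"
      hence "a + (a + b) = a + 1" by simp
      hence "b = a + 1" by (simp only: cs) }
    thus ?thesis using cond by blast
  qed
  moreover
  { assume "a = 1" hence "b*b+b+1 = 0" using Q by (simp add: ac_simps) }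
  moreover
  { assume "b = 1" hence "a*a+a+1 = 0" using Q by (simp add: ac_simps) }
  moreover
  { assume bb: "b = a + 1"
    have id1: "a*a + a*(a+1) + (a+1)*(a+1) = a*a+a+1" by (simp add: algebra_simps cs)
    have X0: "a*a + a*(a+1) + (a+1)*(a+1) = 0" using Q bb by simp
    have aW: "a*a+a+1 = 0" using trans[OF id1[symmetric] X0] .
    have id2: "(a+1)*(a+1) + (a+1) + 1 = a*a+a+1" by (simp add: algebra_simps cs)
    have "b*b+b+1 = 0" unfolding bb using trans[OF id2 aW] .
    hence "a*a+a+1 = 0" "b*b+b+1 = 0" using aW by simp_all }
  ultimately show ?thesis using anb by auto
qed

lemma W_facts:
  assumes two: "(2::'a::field) = 0" and "w*w+w+1 = (0::'a)"
  shows "w \<noteq> 0" "w \<noteq> 1"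
proof -
  note cs = c2_add[OF two] c2_minus[OF two] c2_numeral[OF two]
  show "w \<noteq> 0" using assms by auto
  show "w \<noteq> 1" proof assume "w = 1" thus False using assms cs by simp qed
qed

lemma LW':
  fixes a b :: "'a::field"
  assumes two: "(2::'a) = 0"
    and a: "a \<in> insert 1 {x. x*x+x+1 = 0}" and b: "b \<in> insert 1 {x. x*x+x+1 = 0}" and anb: "a \<noteq> b"
  shows "a*b*(a+b) \<noteq> 0 \<and> (a = 1 \<or> b = 1 \<or> a + b = 1) \<and> a*a+a*b+b*b = 0"
proof -
  note cs = c2_add[OF two] c2_minus[OF two] c2_numeral[OF two]
  have ab0: "a + b \<noteq> 0" using anb c2_eq[OF two, of a b] by simp
  show ?thesis
  proof (cases "a = 1")
    case True
    hence bW: "b*b+b+1 = 0" using b anb by auto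
    have "b \<noteq> 0" using W_facts[OF two bW] by simp
    moreover have "a*a+a*b+b*b = 0" using True bW by (simp add: ac_simps)
    ultimately show ?thesis using True ab0 by simp
  next
    case na: False
    hence aW: "a*a+a+1 = 0" using a by auto
    have a0: "a \<noteq> 0" using W_facts[OF two aW] by simp
    show ?thesis
    proof (cases "b = 1")
      case True
      have "a*a+a*b+b*b = 0" using True aW by (simp add: ac_simps)
      thus ?thesis using True ab0 a0 by simp
    next
      case False
      hence bW: "b*b+b+1 = 0" using b by auto
      have b0: "b \<noteq> 0" using W_facts[OF two bW] by simp
      have "(a+b)*(a+b+1) = (a*a+a+1) + (b*b+b+1)" by (simp add: algebra_simps cs)
      hence "(a+b)*(a+b+1) = 0" using aW bW by simp
      hence "a + b + 1 = 0" using ab0 by simp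
      hence s: "a + b = 1" using c2_eq[OF two, of "a+b" 1] by simp
      hence bb: "b = a + 1"
      proof -
        have "a + (a + b) = a + 1" using s by simp
        thus "b = a + 1" by (simp only: cs)
      qed
      have id1: "a*a + a*(a+1) + (a+1)*(a+1) = a*a+a+1" by (simp add: algebra_simps cs)
      have "a*a+a*b+b*b = 0" unfolding bb using trans[OF id1 aW] .
      thus ?thesis using s a0 b0 ab0 by simp
    qed
  qed
qed

lemma LE1:
  fixes a b :: "'a::field"
  assumes two: "(2::'a) = 0" and C: "a*b*(a+b) \<noteq> 0" and Q: "a*a+a*b+b*b = 1"
  shows "\<not> (a = 1 \<or> b = 1 \<or> a + b = 1)"
proof -
  note cs = c2_add[OF two] c2_minus[OF two] c2_numeral[OF two]
  have a0: "a \<noteq> 0" and b0: "b \<noteq> 0" and ab0: "a + b \<noteq> 0" using C by auto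
  have anb: "a \<noteq> b" using ab0 c2_add(1)[OF two, of a] by auto
  have "a \<noteq> 1"
  proof
    assume a1: "a = 1"
    hence "1 + (b*(b+1)) = 1 + 0" using Q by (simp add: algebra_simps)
    hence "b*(b+1) = 0" by simp
    hence "b + 1 = 0" using b0 by simp
    hence "b = 1" using c2_eq[OF two, of b 1] by simp
    thus False using a1 anb by simp
  qed
  moreover have "b \<noteq> 1"
  proof
    assume b1: "b = 1"
    hence "1 + (a*(a+1)) = 1 + 0" using Q by (simp add: algebra_simps)
    hence "a*(a+1) = 0" by simp
    hence "a + 1 = 0" using a0 by simp
    hence "a = 1" using c2_eq[OF two, of a 1] by simp
    thus False using b1 anb by simp
  qed
  moreover have "a + b \<noteq> 1"
  proof
    assume s: "a + b = 1"
    have "a*a+a*b+b*b = (a+b)*(a+b) + a*b" by (simp add: algebra_simps cs)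
    hence "1 + a*b = 1 + 0" using Q s by simp
    hence "a * b = 0" by simp
    thus False using a0 b0 by simp
  qed
  ultimately show ?thesis by blast
qed

lemma LE2:
  fixes a b :: "'a::field"
  assumes two: "(2::'a) = 0" and C: "a*b*(a+b) \<noteq> 0" and Q: "a*a+a*b+b*b = a*b*(a+b)"
  shows "\<not> (a = 1 \<or> b = 1 \<or> a + b = 1)"
proof -
  note cs = c2_add[OF two] c2_minus[OF two] c2_numeral[OF two]
  have "a \<noteq> 1"
  proof
    assume a1: "a = 1"
    hence "1 + (b + b*b) = 0 + (b + b*b)" using Q by (simp add: algebra_simps)
    thus False by simp
  qed
  moreover have "b \<noteq> 1"
  proof
    assume b1: "b = 1"
    hence "1 + (a + a*a) = 0 + (a + a*a)" using Q by (simp add: algebra_simps)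
    thus False by simp
  qed
  moreover have "a + b \<noteq> 1"
  proof
    assume s: "a + b = 1"
    have "a*a+a*b+b*b = (a+b)*(a+b) + a*b" by (simp add: algebra_simps cs)
    hence "1 + a*b = 0 + a*b" using Q s by simp
    thus False by simp
  qed
  ultimately show ?thesis by blast
qed

lemma LR:
  fixes a b :: "'a::field"
  assumes two: "(2::'a) = 0"
  shows "(a*b*(a+b) \<noteq> 0 \<and> a*a+a*b+b*b = a*b*(a+b) \<and> a*a+a*b+b*b = 1) \<longleftrightarrow>
         (a*a*a+a+1 = 0 \<and> b*b*b+b+1 = 0 \<and> a \<noteq> b)"
proof
  note cs = c2_add[OF two] c2_minus[OF two] c2_numeral[OF two]
  assume h: "a*b*(a+b) \<noteq> 0 \<and> a*a+a*b+b*b = a*b*(a+b) \<and> a*a+a*b+b*b = 1"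
  hence Q: "a*a+a*b+b*b = 1" and Cc: "a*b*(a+b) = 1" by auto
  have "a*a*a + (a*a+a*b+b*b)*a + a*b*(a+b) = 0" by (simp add: algebra_simps cs)
  hence 1: "a*a*a+a+1 = 0" using Q Cc by simp
  have "b*b*b + (a*a+a*b+b*b)*b + a*b*(a+b) = 0" by (simp add: algebra_simps cs)
  hence 2: "b*b*b+b+1 = 0" using Q Cc by simp
  have "a \<noteq> b" using h cs by auto
  thus "a*a*a+a+1 = 0 \<and> b*b*b+b+1 = 0 \<and> a \<noteq> b" using 1 2 by simp
next
  note cs = c2_add[OF two] c2_minus[OF two] c2_numeral[OF two]
  assume h: "a*a*a+a+1 = 0 \<and> b*b*b+b+1 = 0 \<and> a \<noteq> b"
  hence ra: "a*a*a+a+1 = 0" and rb: "b*b*b+b+1 = 0" and anb: "a \<noteq> b" by auto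
  have ab0: "a + b \<noteq> 0" using anb c2_eq[OF two, of a b] by simp
  have "(a+b)*(a*a+a*b+b*b+1) = (a*a*a+a+1) + (b*b*b+b+1)" by (simp add: algebra_simps cs)
  hence "(a+b)*(a*a+a*b+b*b+1) = 0" using ra rb by simp
  hence "a*a+a*b+b*b+1 = 0" using ab0 by simp
  hence Q: "a*a+a*b+b*b = 1" using c2_eq[OF two, of "a*a+a*b+b*b" 1] by simp
  have "a*b*(a+b) = a*(a*a + (a*a+a*b+b*b))" by (simp add: algebra_simps cs)
  also have "\<dots> = a*a*a + a" using Q by (simp add: algebra_simps)
  also have "\<dots> = 1" using c2_eq[OF two, of "a*a*a+a" 1] ra by simp
  finally have Cc: "a*b*(a+b) = 1" .
  show "a*b*(a+b) \<noteq> 0 \<and> a*a+a*b+b*b = a*b*(a+b) \<and> a*a+a*b+b*b = 1" using Q Cc by simp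
qed

lemma sq_inj:
  assumes two: "(2::'a::field) = 0" and "x*x = y*(y::'a)"
  shows "x = y"
proof -
  note cs = c2_add[OF two] c2_minus[OF two] c2_numeral[OF two]
  have "(x+y)*(x+y) = x*x + y*y" by (simp add: algebra_simps cs)
  also have "\<dots> = 0" using assms cs by simp
  finally have "x + y = 0" by simp
  thus ?thesis using c2_eq[OF two, of x y] by simp
qed

lemma sq_surj:
  assumes two: "(2::'a::{field,finite}) = 0"
  shows "\<exists>s. s*s = (y::'a)"
proof -
  have "inj (\<lambda>x::'a. x*x)" by (intro injI) (rule sq_inj[OF two])
  hence "surj (\<lambda>x::'a. x*x)" by (rule finite_UNIV_inj_surj[OF finite_UNIV])
  thus ?thesis by (metis surjD)
qed

lemma Qt: "a*a + a*(t*a) + (t*a)*(t*a) = a*a*(t*t+t+1)" for a t :: "'a::comm_ring_1"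
  by (simp add: algebra_simps)
lemma Ct: "a*(t*a)*(a+t*a) = a*a*a*(t*t+t)" for a t :: "'a::comm_ring_1"
  by (simp add: algebra_simps)

lemma E1_card:
  assumes two: "(2::'a::{field,finite}) = 0"
  shows "card {(a,b::'a). a*b*(a+b) \<noteq> 0 \<and> a*a+a*b+b*b = 1} = card {t::'a. t \<noteq> 0 \<and> t \<noteq> 1 \<and> t*t+t+1 \<noteq> 0}"
proof (rule bij_betw_same_card[where f="\<lambda>(a,b). b / a"], unfold bij_betw_def, intro conjI)
  let ?E = "{(a,b::'a). a*b*(a+b) \<noteq> 0 \<and> a*a+a*b+b*b = 1}"
  let ?T = "{t::'a. t \<noteq> 0 \<and> t \<noteq> 1 \<and> t*t+t+1 \<noteq> 0}"
  have key: "b = (b/a) * a" "a*a*((b/a)*(b/a)+(b/a)+1) = a*a+a*b+b*b" if "a \<noteq> 0" for a b :: 'a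
  proof -
    show b: "b = (b/a) * a" using that by simp
    have "a*a+a*b+b*b = a*a + a*((b/a)*a) + ((b/a)*a)*((b/a)*a)" using b by simp
    also have "\<dots> = a*a*((b/a)*(b/a)+(b/a)+1)" by (rule Qt)
    finally show "a*a*((b/a)*(b/a)+(b/a)+1) = a*a+a*b+b*b" by simp
  qed
  show "inj_on (\<lambda>(a,b). b / a) ?E"
  proof (rule inj_onI, clarify)
    fix a b a' b' :: 'a
    assume h1: "a*b*(a+b) \<noteq> 0" "a*a+a*b+b*b = 1" and h2: "a'*b'*(a'+b') \<noteq> 0" "a'*a'+a'*b'+b'*b' = 1"
      and eq: "b / a = b' / a'"
    have a0: "a \<noteq> 0" "a' \<noteq> 0" using h1 h2 by auto
    have "a*a*((b/a)*(b/a)+(b/a)+1) = 1" using key(2)[OF a0(1)] h1 by simp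
    moreover have "a'*a'*((b/a)*(b/a)+(b/a)+1) = 1" using key(2)[OF a0(2)] h2 eq by simp
    ultimately have "a*a = a'*a'" by (metis mult_cancel_right mult_zero_right zero_neq_one)
    hence aa: "a = a'" by (rule sq_inj[OF two])
    moreover have "b = b'" using key(1)[OF a0(1)] key(1)[OF a0(2)] eq aa by metis
    ultimately show "a = a' \<and> b = b'" by simp
  qed
  show "(\<lambda>(a,b). b / a) ` ?E = ?T"
  proof
    show "(\<lambda>(a,b). b / a) ` ?E \<subseteq> ?T"
    proof clarify
      fix a b :: 'a
      assume h: "a*b*(a+b) \<noteq> 0" "a*a+a*b+b*b = 1"
      have a0: "a \<noteq> 0" "b \<noteq> 0" "a + b \<noteq> 0" using h by auto
      have "a \<noteq> b" using a0(3) c2_add(1)[OF two, of a] by auto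
      hence "b / a \<noteq> 1" using a0 by simp
      moreover have "b / a \<noteq> 0" using a0 by simp
      moreover have "(b/a)*(b/a)+(b/a)+1 \<noteq> 0"
      proof
        assume z: "(b/a)*(b/a)+(b/a)+1 = 0"
        have "a*a*((b/a)*(b/a)+(b/a)+1) = a*a+a*b+b*b" by (rule key(2)[OF a0(1)])
        hence "a*a*0 = a*a+a*b+b*b" by (simp only: z)
        thus False using h(2) by simp
      qed
      ultimately show "b / a \<noteq> 0 \<and> b / a \<noteq> 1 \<and> (b/a)*(b/a)+(b/a)+1 \<noteq> 0" by simp
    qed
    show "?T \<subseteq> (\<lambda>(a,b). b / a) ` ?E"
    proof
      fix t assume "t \<in> ?T"
      hence t: "t \<noteq> 0" "t \<noteq> 1" "t*t+t+1 \<noteq> 0" by auto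
      obtain s where s: "s*s = inverse (t*t+t+1)" using sq_surj[OF two] by blast
      have s0: "s \<noteq> 0" using s t(3) by auto
      have t1: "t*t + t \<noteq> 0"
      proof
        assume "t*t+t = 0" hence "t*(t+1) = 0" by (simp add: algebra_simps)
        hence "t + 1 = 0" using t(1) by simp
        thus False using t(2) c2_eq[OF two, of t 1] by simp
      qed
      have C: "s*(t*s)*(s+t*s) \<noteq> 0" unfolding Ct using s0 t1 by simp
      have "s*s + s*(t*s) + (t*s)*(t*s) = s*s*(t*t+t+1)" by (rule Qt)
      hence Q: "s*s + s*(t*s) + (t*s)*(t*s) = 1" using s t(3) by simp
      have "(s, t*s) \<in> ?E" using C Q by simp
      moreover have "t = (\<lambda>(a,b). b / a) (s, t*s)" using s0 by simp
      ultimately show "t \<in> (\<lambda>(a,b). b / a) ` ?E" by blast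
    qed
  qed
qed

lemma E2_card:
  assumes two: "(2::'a::{field,finite}) = 0"
  shows "card {(a,b::'a). a*b*(a+b) \<noteq> 0 \<and> a*a+a*b+b*b = a*b*(a+b)} = card {t::'a. t \<noteq> 0 \<and> t \<noteq> 1 \<and> t*t+t+1 \<noteq> 0}"
proof (rule bij_betw_same_card[where f="\<lambda>(a,b). b / a"], unfold bij_betw_def, intro conjI)
  let ?E = "{(a,b::'a). a*b*(a+b) \<noteq> 0 \<and> a*a+a*b+b*b = a*b*(a+b)}"
  let ?T = "{t::'a. t \<noteq> 0 \<and> t \<noteq> 1 \<and> t*t+t+1 \<noteq> 0}"
  have key: "b = (b/a) * a" "a*a*((b/a)*(b/a)+(b/a)+1) = a*a+a*b+b*b"
     "a*a*a*((b/a)*(b/a)+(b/a)) = a*b*(a+b)" if "a \<noteq> 0" for a b :: 'a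
  proof -
    show b: "b = (b/a) * a" using that by simp
    have "a*a+a*b+b*b = a*a + a*((b/a)*a) + ((b/a)*a)*((b/a)*a)" using b by simp
    also have "\<dots> = a*a*((b/a)*(b/a)+(b/a)+1)" by (rule Qt)
    finally show "a*a*((b/a)*(b/a)+(b/a)+1) = a*a+a*b+b*b" by simp
    have "a*b*(a+b) = a*((b/a)*a)*(a+(b/a)*a)" using b by simp
    also have "\<dots> = a*a*a*((b/a)*(b/a)+(b/a))" by (rule Ct)
    finally show "a*a*a*((b/a)*(b/a)+(b/a)) = a*b*(a+b)" by (rule sym)
  qed
  have det: "a = (t*t+t+1) / (t*t+t)" if "a \<noteq> 0" "a*a*(t*t+t+1) = a*a*a*(t*t+t)" "t*t+t \<noteq> 0" for a t :: 'a
  proof -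
    have "a*a*(t*t+t+1) = a*a*(a*(t*t+t))" using that(2) by (simp add: ac_simps)
    hence "t*t+t+1 = a*(t*t+t)" using that(1) by simp
    thus ?thesis using that(3) by (simp add: field_simps)
  qed
  show "inj_on (\<lambda>(a,b). b / a) ?E"
  proof (rule inj_onI, clarify)
    fix a b a' b' :: 'a
    assume h1: "a*b*(a+b) \<noteq> 0" "a*a+a*b+b*b = a*b*(a+b)" and h2: "a'*b'*(a'+b') \<noteq> 0" "a'*a'+a'*b'+b'*b' = a'*b'*(a'+b')"
      and eq: "b / a = b' / a'"
    have a0: "a \<noteq> 0" "a' \<noteq> 0" using h1 h2 by auto
    let ?t = "b / a"
    have nz: "?t*?t+?t \<noteq> 0"
    proof
      assume z: "?t*?t+?t = 0"
      have "a*a*a*(?t*?t+?t) = a*b*(a+b)" by (rule key(3)[OF a0(1)])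
      hence "a*a*a*0 = a*b*(a+b)" by (simp only: z)
      thus False using h1(1) by simp
    qed
    have e1: "a*a*(?t*?t+?t+1) = a*a*a*(?t*?t+?t)"
      using trans[OF trans[OF key(2)[OF a0(1)] h1(2)] key(3)[OF a0(1), symmetric]] .
    have e2: "a'*a'*(?t*?t+?t+1) = a'*a'*a'*(?t*?t+?t)" unfolding eq
      using trans[OF trans[OF key(2)[OF a0(2)] h2(2)] key(3)[OF a0(2), symmetric]] .
    have aa: "a = a'" using det[OF a0(1) e1 nz] det[OF a0(2) e2 nz] by simp
    moreover have "b = b'" using key(1)[OF a0(1)] key(1)[OF a0(2)] eq aa by metis
    ultimately show "a = a' \<and> b = b'" by simp
  qed
  show "(\<lambda>(a,b). b / a) ` ?E = ?T"
  proof
    show "(\<lambda>(a,b). b / a) ` ?E \<subseteq> ?T"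
    proof clarify
      fix a b :: 'a
      assume h: "a*b*(a+b) \<noteq> 0" "a*a+a*b+b*b = a*b*(a+b)"
      have a0: "a \<noteq> 0" "b \<noteq> 0" "a + b \<noteq> 0" using h by auto
      have "a \<noteq> b" using a0(3) c2_add(1)[OF two, of a] by auto
      hence "b / a \<noteq> 1" using a0 by simp
      moreover have "b / a \<noteq> 0" using a0 by simp
      moreover have "(b/a)*(b/a)+(b/a)+1 \<noteq> 0"
      proof
        assume z: "(b/a)*(b/a)+(b/a)+1 = 0"
        have "a*a*((b/a)*(b/a)+(b/a)+1) = a*a+a*b+b*b" by (rule key(2)[OF a0(1)])
        hence "a*a*0 = a*a+a*b+b*b" by (simp only: z)
        thus False using h by simp
      qed
      ultimately show "b / a \<noteq> 0 \<and> b / a \<noteq> 1 \<and> (b/a)*(b/a)+(b/a)+1 \<noteq> 0" by simp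
    qed
    show "?T \<subseteq> (\<lambda>(a,b). b / a) ` ?E"
    proof
      fix t assume "t \<in> ?T"
      hence t: "t \<noteq> 0" "t \<noteq> 1" "t*t+t+1 \<noteq> 0" by auto
      have t1: "t*t + t \<noteq> 0"
      proof
        assume "t*t+t = 0" hence "t*(t+1) = 0" by (simp add: algebra_simps)
        hence "t + 1 = 0" using t(1) by simp
        thus False using t(2) c2_eq[OF two, of t 1] by simp
      qed
      define s where "s = (t*t+t+1) / (t*t+t)"
      have s0: "s \<noteq> 0" using t(3) t1 unfolding s_def by simp
      have ss: "s * (t*t+t) = t*t+t+1" using t1 unfolding s_def by simp
      have C: "s*(t*s)*(s+t*s) \<noteq> 0" unfolding Ct using s0 t1 by simp
      have "s*s + s*(t*s) + (t*s)*(t*s) = s*s*(t*t+t+1)" by (rule Qt)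
      also have "\<dots> = s*s*(s*(t*t+t))" using ss by simp
      also have "\<dots> = s*s*s*(t*t+t)" by (simp only: mult.assoc)
      also have "\<dots> = s*(t*s)*(s+t*s)" by (rule Ct[symmetric])
      finally have Q: "s*s + s*(t*s) + (t*s)*(t*s) = s*(t*s)*(s+t*s)" .
      have "(s, t*s) \<in> ?E" using C Q by simp
      moreover have "t = (\<lambda>(a,b). b / a) (s, t*s)" using s0 by simp
      ultimately show "t \<in> (\<lambda>(a,b). b / a) ` ?E" by blast
    qed
  qed
qed

lemma char2_of_card:
  assumes "card (UNIV::'a::{field,finite} set) = 2 ^ n" "n \<ge> 1"
  shows "(1::'a) + 1 = 0"
proof -
  have bij: "bij (\<lambda>x::'a. x + 1)"
    by (rule bij_betw_byWitness[where f'="\<lambda>x. x - 1"]) auto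
  have "(\<Sum>x\<in>UNIV. x + (1::'a)) = (\<Sum>x\<in>UNIV. x)"
    using sum.reindex_bij_betw[OF bij, of "\<lambda>x. x"] by simp
  moreover have "(\<Sum>x\<in>UNIV. x + (1::'a)) = (\<Sum>x\<in>UNIV. x) + of_nat (card (UNIV::'a set))"
    by (simp add: sum.distrib)
  ultimately have "(of_nat (card (UNIV::'a set)) :: 'a) = 0" by simp
  hence "(2::'a) ^ n = 0" using assms(1) by simp
  hence "(2::'a) = 0" by simp
  thus ?thesis by simp
qed

lemma fermat_ff:
  fixes x :: "'a::{field,finite}"
  shows "x ^ card (UNIV::'a set) = x"
proof (cases "x = 0")
  case True thus ?thesis by (simp add: power_0_left)
next
  case False
  let ?A = "UNIV - {0::'a}"
  have fin: "finite ?A" by simp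
  have inj: "inj_on ((*) x) ?A" using False by (simp add: inj_on_def)
  have img: "(*) x ` ?A = ?A"
  proof
    show "(*) x ` ?A \<subseteq> ?A" using False by auto
    show "?A \<subseteq> (*) x ` ?A"
    proof
      fix y assume "y \<in> ?A"
      hence "y = x * (y / x)" "y / x \<in> ?A" using False by auto
      thus "y \<in> (*) x ` ?A" by blast
    qed
  qed
  have "prod id ?A = prod id ((*) x ` ?A)" using img by simp
  also have "\<dots> = prod ((*) x) ?A" using prod.reindex[OF inj, of id] by simp
  also have "\<dots> = prod (\<lambda>_. x) ?A * prod id ?A" using prod.distrib[of "\<lambda>_. x" id ?A] by simp
  also have "\<dots> = x ^ card ?A * prod id ?A" by (simp only: prod_constant)
  finally have e: "x ^ card ?A * prod id ?A = 1 * prod id ?A" by simp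
  have "prod id ?A \<noteq> 0" using fin by (subst prod_zero_iff) auto
  with e have x1: "x ^ card ?A = 1" by (simp only: mult_cancel_right) simp
  have q: "card (UNIV::'a set) = Suc (card ?A)"
    using card_Suc_Diff1[of "UNIV::'a set" 0] by simp
  show ?thesis unfolding q power_Suc x1 by simp
qed

lemma dvd_pow_diff:
  fixes a b :: "'a::comm_ring_1"
  shows "(a - b) dvd (a ^ k - b ^ k)"
proof (induction k)
  case 0 thus ?case by simp
next
  case (Suc k)
  have "a ^ Suc k - b ^ Suc k = a * (a ^ k - b ^ k) + (a - b) * b ^ k"
    by (simp add: algebra_simps)
  thus ?case using Suc by simp
qed

lemma pow_pow_dvd:
  fixes x :: "'a::comm_ring_1"
  shows "(x ^ k - x) dvd (x ^ (k ^ m) - x)"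
proof (induction m)
  case 0 thus ?case by simp
next
  case (Suc m)
  have e: "x ^ (k ^ Suc m) - x = ((x ^ (k ^ m)) ^ k - x ^ k) + (x ^ k - x)"
    by (simp add: power_mult[symmetric] mult.commute)
  have "(x ^ k - x) dvd ((x ^ (k ^ m)) ^ k - x ^ k)"
    using dvd_trans[OF Suc dvd_pow_diff] by blast
  hence "(x ^ k - x) dvd ((x ^ (k ^ m)) ^ k - x ^ k) + (x ^ k - x)"
    by (rule dvd_add) simp
  thus ?case by (subst e)
qed

lemma degree_Xq:
  assumes "q \<ge> 2"
  shows "degree ([:0,1:] ^ q - [:0,1::'a::field:]) = q"
proof -
  have "[:0,1:] ^ q - [:0,1::'a:] = [:0,1:] ^ q + (- [:0,1:])" by simp
  also have "degree \<dots> = q"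
    using assms by (subst degree_add_eq_left) (simp_all add: degree_linear_power)
  finally show ?thesis .
qed

lemma roots_full:
  fixes P :: "'a::{field,finite} poly"
  assumes dv: "P dvd [:0,1:] ^ card (UNIV::'a set) - [:0,1:]"
      and q2: "card (UNIV::'a set) \<ge> 2"
      and ferm: "\<And>x::'a. x ^ card (UNIV::'a set) = x"
  shows "card {x. poly P x = 0} = degree P"
proof -
  let ?q = "card (UNIV::'a set)"
  obtain G where eq: "[:0,1:] ^ ?q - [:0,1:] = P * G" using dv by (auto elim: dvdE)
  have dq: "degree ([:0,1:] ^ ?q - [:0,1::'a:]) = ?q" using degree_Xq[OF q2] .
  hence nz: "[:0,1:] ^ ?q - [:0,1::'a:] \<noteq> 0" using q2 by auto
  hence P0: "P \<noteq> 0" and G0: "G \<noteq> 0" using eq by auto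
  have deg: "?q = degree P + degree G" using dq eq degree_mult_eq[OF P0 G0] by simp
  have "UNIV \<subseteq> {x. poly P x = 0} \<union> {x. poly G x = 0}"
  proof
    fix x :: 'a
    have "poly ([:0,1:] ^ ?q - [:0,1:]) x = 0" using ferm[of x] by simp
    hence "poly P x * poly G x = 0" using eq by simp
    thus "x \<in> {x. poly P x = 0} \<union> {x. poly G x = 0}" by auto
  qed
  hence "?q \<le> card ({x. poly P x = 0} \<union> {x. poly G x = 0})"
    by (intro card_mono) auto
  also have "\<dots> \<le> card {x. poly P x = 0} + card {x. poly G x = 0}" by (rule card_Un_le)
  also have "\<dots> \<le> card {x. poly P x = 0} + degree G"
    using card_poly_roots_bound[OF G0] by simp
  finally have "degree P \<le> card {x. poly P x = 0}" using deg by simp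
  moreover have "card {x. poly P x = 0} \<le> degree P" using card_poly_roots_bound[OF P0] .
  ultimately show ?thesis by simp
qed

lemma quad_dvd: "[:1,1,1:] dvd ([:0,1:] ^ 4 - [:0,1::'a::comm_ring_1:])"
proof
  show "[:0,1:] ^ 4 - [:0,1::'a:] = [:1,1,1:] * [:0,-1,1:]"
    by (simp add: numeral_eq_Suc)
qed

lemma cubic_dvd:
  assumes c2: "(1::'a::comm_ring_1) + 1 = 0"
  shows "[:1,1,0,1:] dvd ([:0,1:] ^ 8 - [:0,1::'a:])"
proof
  have m: "-(1::'a) = 1" using c2 by (metis add_eq_0_iff)
  show "[:0,1:] ^ 8 - [:0,1::'a:] = [:1,1,0,1:] * [:0,1,1,1,0,1:]"
    using c2 by (simp add: numeral_eq_Suc m one_add_one)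
qed

lemma pow_iter:
  fixes x :: "'a::monoid_mult"
  assumes "x ^ k = x" shows "x ^ (k ^ m) = x"
proof (induction m)
  case 0 thus ?case by simp
next
  case (Suc m)
  have "x ^ (k ^ Suc m) = (x ^ (k ^ m)) ^ k" by (simp add: power_mult[symmetric] mult.commute)
  thus ?case using Suc assms by simp
qed

lemma W_card:
  assumes card: "card (UNIV::'a::{field,finite} set) = 2 ^ n" and n2: "n \<ge> 2"
  shows "card {x::'a. x*x+x+1 = 0} = (if even n then 2 else 0)"
proof -
  have two: "(2::'a) = 0" using char2_of_card[OF card] n2 by simp
  note cs = c2_add[OF two] c2_minus[OF two] c2_numeral[OF two]
  have ferm: "x ^ (2 ^ n) = x" for x :: 'a using fermat_ff[of x] card by simp
  have "(2::nat) ^ 1 \<le> 2 ^ n" by (rule power_increasing) (use n2 in auto)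
  hence q2: "card (UNIV::'a set) \<ge> 2" using card by simp
  show ?thesis
  proof (cases "even n")
    case True
    then obtain m where m: "n = 2 * m" by auto
    have q: "card (UNIV::'a set) = 4 ^ m" using card m by (simp add: power_mult)
    have "[:1,1,1::'a:] dvd [:0,1:] ^ card (UNIV::'a set) - [:0,1:]"
      unfolding q using dvd_trans[OF quad_dvd pow_pow_dvd] by blast
    hence "card {x. poly [:1,1,1::'a:] x = 0} = degree [:1,1,1::'a:]"
      by (rule roots_full[OF _ q2 fermat_ff])
    moreover have "{x. poly [:1,1,1::'a:] x = 0} = {x::'a. x*x+x+1 = 0}" by (auto simp: algebra_simps)
    ultimately show ?thesis using True by simp
  next
    case False
    then obtain m where m: "n = 2 * m + 1" using oddE by blast
    have "{x::'a. x*x+x+1 = 0} = {}"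
    proof (rule ccontr)
      assume "{x::'a. x*x+x+1 = 0} \<noteq> {}"
      then obtain w :: 'a where w: "w*w+w+1 = 0" by auto
      have ww: "w*w = w + 1" using w c2_eq[OF two, of "w*w" "w+1"] by (simp add: ac_simps)
      have "w ^ 4 = (w*w)*(w*w)" by (simp add: numeral_eq_Suc algebra_simps)
      also have "\<dots> = (w+1)*(w+1)" using ww by simp
      also have "\<dots> = w*w + 1" by (simp add: algebra_simps cs)
      also have "\<dots> = w" using ww cs by (simp add: ac_simps)
      finally have w4: "w ^ 4 = w" .
      have e: "(2::nat) ^ n = 4 ^ m * 2" unfolding m by (simp add: power_add power_mult)
      have "w ^ (2 ^ n) = (w ^ (4 ^ m)) ^ 2" unfolding e by (rule power_mult)
      also have "\<dots> = w ^ 2" using pow_iter[OF w4] by simp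
      finally have "w ^ 2 = w" using ferm[of w] by simp
      hence "w + 1 = w" using ww by (simp add: power2_eq_square)
      thus False by simp
    qed
    thus ?thesis using False by simp
  qed
qed

lemma R_card:
  assumes card: "card (UNIV::'a::{field,finite} set) = 2 ^ n" and n2: "n \<ge> 2"
  shows "card {x::'a. x*x*x+x+1 = 0} = (if 3 dvd n then 3 else 0)"
proof -
  have c2: "(1::'a) + 1 = 0" using char2_of_card[OF card] n2 by simp
  have two: "(2::'a) = 0" using c2 by simp
  note cs = c2_add[OF two] c2_minus[OF two] c2_numeral[OF two]
  have ferm: "x ^ (2 ^ n) = x" for x :: 'a using fermat_ff[of x] card by simp
  have "(2::nat) ^ 1 \<le> 2 ^ n" by (rule power_increasing) (use n2 in auto)
  hence q2: "card (UNIV::'a set) \<ge> 2" using card by simp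
  show ?thesis
  proof (cases "3 dvd n")
    case True
    then obtain m where m: "n = 3 * m" by auto
    have q: "card (UNIV::'a set) = 8 ^ m" using card m by (simp add: power_mult)
    have "[:1,1,0,1::'a:] dvd [:0,1:] ^ card (UNIV::'a set) - [:0,1:]"
      unfolding q using dvd_trans[OF cubic_dvd[OF c2] pow_pow_dvd] by blast
    hence "card {x. poly [:1,1,0,1::'a:] x = 0} = degree [:1,1,0,1::'a:]"
      by (rule roots_full[OF _ q2 fermat_ff])
    moreover have "{x. poly [:1,1,0,1::'a:] x = 0} = {x::'a. x*x*x+x+1 = 0}" by (auto simp: algebra_simps)
    ultimately show ?thesis using True by simp
  next
    case False
    have "{x::'a. x*x*x+x+1 = 0} = {}"
    proof (rule ccontr)
      assume "{x::'a. x*x*x+x+1 = 0} \<noteq> {}"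
      then obtain w :: 'a where w: "w*w*w+w+1 = 0" by auto
      have w0: "w \<noteq> 0" using w by auto
      have w3: "w*w*w = w + 1" using w c2_eq[OF two, of "w*w*w" "w+1"] by (simp add: ac_simps)
      have w4: "w ^ 4 = w*w + w"
      proof -
        have "w ^ 4 = w * (w*w*w)" by (simp add: numeral_eq_Suc algebra_simps)
        also have "\<dots> = w*w + w" using w3 by (simp add: algebra_simps)
        finally show ?thesis .
      qed
      have "w ^ 8 = (w ^ 4) * (w ^ 4)" by (simp add: power_add[symmetric])
      also have "\<dots> = (w*w + w) * (w*w + w)" using w4 by simp
      also have "\<dots> = w ^ 4 + w * w" by (simp add: algebra_simps cs numeral_eq_Suc)
      also have "\<dots> = w" using w4 cs by (simp add: ac_simps)
      finally have w8: "w ^ 8 = w" .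
      have "n mod 3 = 1 \<or> n mod 3 = 2" using False by presburger
      moreover have "n = 3 * (n div 3) + n mod 3" by simp
      ultimately obtain m where m: "n = 3 * m + 1 \<or> n = 3 * m + 2" by metis
      have p8: "w ^ (8 ^ m) = w" using pow_iter[OF w8] .
      show False using m
      proof
        assume m1: "n = 3 * m + 1"
        have e: "(2::nat) ^ n = 8 ^ m * 2" unfolding m1 by (simp add: power_add power_mult)
        have "w ^ (2 ^ n) = (w ^ (8 ^ m)) ^ 2" unfolding e by (rule power_mult)
        hence "w ^ 2 = w" using p8 ferm[of w] by simp
        hence "w * w = w * 1" by (simp add: power2_eq_square)
        hence "w = 1" using w0 by simp
        thus False using w cs by simp
      next
        assume m2: "n = 3 * m + 2"
        have e: "(2::nat) ^ n = 8 ^ m * 4" unfolding m2 by (simp add: power_add power_mult)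
        have "w ^ (2 ^ n) = (w ^ (8 ^ m)) ^ 4" unfolding e by (rule power_mult)
        hence "w ^ 4 = w" using p8 ferm[of w] by simp
        hence "w * w + w = 0 + w" using w4 by simp
        hence "w * w = 0" by simp
        thus False using w0 by simp
      qed
    qed
    thus ?thesis using False by simp
  qed
qed

lemma point:
  fixes a b :: "'a::{field,finite}"
  assumes two: "(2::'a) = 0" and C: "a*b*(a+b) \<noteq> 0"
  shows "(nabla inv_swap01 a b = 8) = (a*a*a+a+1 = 0 \<and> b*b*b+b+1 = 0 \<and> a \<noteq> b)"
    and "(nabla inv_swap01 a b = 4) = ((a \<in> insert 1 {x. x*x+x+1 = 0} \<and> b \<in> insert 1 {x. x*x+x+1 = 0} \<and> a \<noteq> b)
           \<or> (a*a+a*b+b*b = a*b*(a+b) \<and> a*a+a*b+b*b \<noteq> 1) \<or> (a*a+a*b+b*b = 1 \<and> a*a+a*b+b*b \<noteq> a*b*(a+b)))"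
    and "nabla inv_swap01 a b = 0 \<or> nabla inv_swap01 a b = 4 \<or> nabla inv_swap01 a b = 8"
proof -
  note N = NAB[OF two C]
  show "nabla inv_swap01 a b = 0 \<or> nabla inv_swap01 a b = 4 \<or> nabla inv_swap01 a b = 8"
    unfolding N by auto
  show "(nabla inv_swap01 a b = 8) = (a*a*a+a+1 = 0 \<and> b*b*b+b+1 = 0 \<and> a \<noteq> b)"
  proof (cases "a = 1 \<or> b = 1 \<or> a + b = 1")
    case True
    have "\<not> (a*a*a+a+1 = 0 \<and> b*b*b+b+1 = 0 \<and> a \<noteq> b)"
    proof
      assume "a*a*a+a+1 = 0 \<and> b*b*b+b+1 = 0 \<and> a \<noteq> b"
      hence "a*a+a*b+b*b = 1" using LR[OF two, of a b] by blast
      thus False using LE1[OF two C] True by blast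
    qed
    thus ?thesis unfolding N using True by simp
  next
    case False
    have "(nabla inv_swap01 a b = 8) = (a*a+a*b+b*b = a*b*(a+b) \<and> a*a+a*b+b*b = 1)"
      unfolding N using False by auto
    also have "\<dots> = (a*a*a+a+1 = 0 \<and> b*b*b+b+1 = 0 \<and> a \<noteq> b)" using LR[OF two, of a b] C by blast
    finally show ?thesis .
  qed
  show "(nabla inv_swap01 a b = 4) = ((a \<in> insert 1 {x. x*x+x+1 = 0} \<and> b \<in> insert 1 {x. x*x+x+1 = 0} \<and> a \<noteq> b)
           \<or> (a*a+a*b+b*b = a*b*(a+b) \<and> a*a+a*b+b*b \<noteq> 1) \<or> (a*a+a*b+b*b = 1 \<and> a*a+a*b+b*b \<noteq> a*b*(a+b)))"
  proof (cases "a = 1 \<or> b = 1 \<or> a + b = 1")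
    case True
    have n1: "a*a+a*b+b*b \<noteq> 1" using LE1[OF two C] True by blast
    have n2: "a*a+a*b+b*b \<noteq> a*b*(a+b)" using LE2[OF two C] True by blast
    have "(a \<in> insert 1 {x. x*x+x+1 = 0} \<and> b \<in> insert 1 {x. x*x+x+1 = 0} \<and> a \<noteq> b) = (a*a+a*b+b*b = 0)"
      using LW[OF two C True] LW'[OF two] by blast
    thus ?thesis unfolding N using True n1 n2 by simp
  next
    case False
    have "\<not> (a \<in> insert 1 {x. x*x+x+1 = 0} \<and> b \<in> insert 1 {x. x*x+x+1 = 0} \<and> a \<noteq> b)"
      using LW'[OF two, of a b] False by blast
    thus ?thesis unfolding N using False by auto
  qed
qed

lemma card_offd:
  assumes fin: "finite S"
  shows "card {(a,b). a \<in> S \<and> b \<in> S \<and> a \<noteq> b} + card S = card S * card S"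
proof -
  let ?O = "{(a,b). a \<in> S \<and> b \<in> S \<and> a \<noteq> b}"
  let ?D = "(\<lambda>x. (x,x)) ` S"
  have eq: "S \<times> S = ?O \<union> ?D" by auto
  have dj: "?O \<inter> ?D = {}" by auto
  have cD: "card ?D = card S" by (rule card_image) (auto simp: inj_on_def)
  have fO: "finite ?O" by (rule finite_subset[of _ "S \<times> S"]) (use fin in auto)
  have fD: "finite ?D" using fin by simp
  have "card S * card S = card (S \<times> S)" by (simp add: card_cartesian_product)
  also have "\<dots> = card (?O \<union> ?D)" by (simp only: eq)
  also have "\<dots> = card ?O + card ?D" by (rule card_Un_disjoint[OF fO fD dj])
  finally show ?thesis using cD by simp
qed


theorem mainTheorem2:
  fixes n :: nat
  assumes "n \<ge> 2"
    and "card (UNIV :: 'a::{field,finite} set) = 2 ^ n"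
  shows "int (omega (inv_swap01 :: 'a \<Rightarrow> 'a) 8) = (if 3 dvd n then 6 else 0)
     \<and> int (omega (inv_swap01 :: 'a \<Rightarrow> 'a) 4) =
         (if 2 dvd n then (if 3 dvd n then 2 ^ (n + 1) - 14 else 2 ^ (n + 1) - 2)
          else (if 3 dvd n then 2 ^ (n + 1) - 16 else 2 ^ (n + 1) - 4))
     \<and> int (omega (inv_swap01 :: 'a \<Rightarrow> 'a) 0) =
         (if 2 dvd n then (if 3 dvd n then 2 ^ (2 * n) - 5 * 2 ^ n + 10 else 2 ^ (2 * n) - 5 * 2 ^ n + 4)
          else (if 3 dvd n then 2 ^ (2 * n) - 5 * 2 ^ n + 12 else 2 ^ (2 * n) - 5 * 2 ^ n + 6))"
proof -
  have n1: "n \<ge> 1" using assms(1) by simp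
  have c2: "(1::'a) + 1 = 0" using char2_of_card[OF assms(2) n1] .
  have two: "(2::'a) = 0" using c2 by simp
  define q where "q = card (UNIV::'a set)"
  have q: "q = 2 ^ n" using assms(2) unfolding q_def .
  define W where "W = {x::'a. x*x+x+1 = 0}"
  define R where "R = {x::'a. x*x*x+x+1 = 0}"
  define U where "U = insert (1::'a) W"
  define E1 where "E1 = {(a,b::'a). a*b*(a+b) \<noteq> 0 \<and> a*a+a*b+b*b = 1}"
  define E2 where "E2 = {(a,b::'a). a*b*(a+b) \<noteq> 0 \<and> a*a+a*b+b*b = a*b*(a+b)}"
  define T0 where "T0 = {t::'a. t \<noteq> 0 \<and> t \<noteq> 1 \<and> t*t+t+1 \<noteq> 0}"
  define D where "D = {(a,b::'a). a*b*(a+b) \<noteq> 0}"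
  define offd where "offd S = {(a,b). a \<in> S \<and> b \<in> S \<and> a \<noteq> b}" for S :: "'a set"
  define S0 where "S0 = {(a,b::'a). a*b*(a+b) \<noteq> 0 \<and> nabla inv_swap01 a b = 0}"
  define S4 where "S4 = {(a,b::'a). a*b*(a+b) \<noteq> 0 \<and> nabla inv_swap01 a b = 4}"
  define S8 where "S8 = {(a,b::'a). a*b*(a+b) \<noteq> 0 \<and> nabla inv_swap01 a b = 8}"
  have o0: "omega (inv_swap01 :: 'a \<Rightarrow> 'a) 0 = card S0" unfolding omega_def S0_def ..
  have o4: "omega (inv_swap01 :: 'a \<Rightarrow> 'a) 4 = card S4" unfolding omega_def S4_def ..
  have o8: "omega (inv_swap01 :: 'a \<Rightarrow> 'a) 8 = card S8" unfolding omega_def S8_def ..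

  have S8eq: "S8 = offd R"
  proof
    show "S8 \<subseteq> offd R"
    proof clarify
      fix a b assume "(a, b) \<in> S8"
      hence C: "a*b*(a+b) \<noteq> 0" and N: "nabla inv_swap01 a b = 8" unfolding S8_def by auto
      show "(a, b) \<in> offd R" using point(1)[OF two C] N unfolding offd_def R_def by simp
    qed
    show "offd R \<subseteq> S8"
    proof clarify
      fix a b assume "(a, b) \<in> offd R"
      hence h: "a*a*a+a+1 = 0 \<and> b*b*b+b+1 = 0 \<and> a \<noteq> b" unfolding offd_def R_def by simp
      hence C: "a*b*(a+b) \<noteq> 0" using LR[OF two, of a b] by blast
      show "(a, b) \<in> S8" using point(1)[OF two C] h C unfolding S8_def by simp
    qed
  qed
  have E12: "E1 \<inter> E2 = offd R"
  proof
    show "E1 \<inter> E2 \<subseteq> offd R"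
    proof clarify
      fix a b assume "(a, b) \<in> E1" "(a, b) \<in> E2"
      hence "a*b*(a+b) \<noteq> 0 \<and> a*a+a*b+b*b = a*b*(a+b) \<and> a*a+a*b+b*b = 1" unfolding E1_def E2_def by simp
      hence "a*a*a+a+1 = 0 \<and> b*b*b+b+1 = 0 \<and> a \<noteq> b" using LR[OF two, of a b] by blast
      thus "(a, b) \<in> offd R" unfolding offd_def R_def by simp
    qed
    show "offd R \<subseteq> E1 \<inter> E2"
    proof clarify
      fix a b assume "(a, b) \<in> offd R"
      hence h: "a*a*a+a+1 = 0 \<and> b*b*b+b+1 = 0 \<and> a \<noteq> b" unfolding offd_def R_def by simp
      hence "a*b*(a+b) \<noteq> 0 \<and> a*a+a*b+b*b = a*b*(a+b) \<and> a*a+a*b+b*b = 1" using LR[OF two, of a b] by blast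
      moreover have "((a, b) \<in> E1) = (a*b*(a+b) \<noteq> 0 \<and> a*a+a*b+b*b = 1)" unfolding E1_def by simp
      moreover have "((a, b) \<in> E2) = (a*b*(a+b) \<noteq> 0 \<and> a*a+a*b+b*b = a*b*(a+b))" unfolding E2_def by simp
      ultimately show "(a, b) \<in> E1 \<inter> E2" by blast
    qed
  qed
  have S4eq: "S4 = offd U \<union> (E2 - E1) \<union> (E1 - E2)"
  proof
    show "S4 \<subseteq> offd U \<union> (E2 - E1) \<union> (E1 - E2)"
    proof (rule subsetI)
      fix x assume "x \<in> S4"
      then obtain a b where xab: "x = (a, b)" and "(a, b) \<in> S4" by (cases x) auto
      hence C: "a*b*(a+b) \<noteq> 0" and N: "nabla inv_swap01 a b = 4" unfolding S4_def by auto
      have "(a \<in> U \<and> b \<in> U \<and> a \<noteq> b)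
           \<or> (a*a+a*b+b*b = a*b*(a+b) \<and> a*a+a*b+b*b \<noteq> 1) \<or> (a*a+a*b+b*b = 1 \<and> a*a+a*b+b*b \<noteq> a*b*(a+b))"
        using point(2)[OF two C] N unfolding U_def W_def by simp
      hence "(a, b) \<in> offd U \<union> (E2 - E1) \<union> (E1 - E2)" using C unfolding offd_def E1_def E2_def by auto
      thus "x \<in> offd U \<union> (E2 - E1) \<union> (E1 - E2)" using xab by simp
    qed
    show "offd U \<union> (E2 - E1) \<union> (E1 - E2) \<subseteq> S4"
    proof (rule subsetI)
      fix x assume "x \<in> offd U \<union> (E2 - E1) \<union> (E1 - E2)"
      then obtain a b where xab: "x = (a, b)" and h: "(a, b) \<in> offd U \<union> (E2 - E1) \<union> (E1 - E2)" by (cases x) auto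
      have C: "a*b*(a+b) \<noteq> 0"
      proof (cases "(a, b) \<in> offd U")
        case True thus ?thesis using LW'[OF two, of a b] unfolding offd_def U_def W_def by simp
      next
        case False thus ?thesis using h unfolding E1_def E2_def by auto
      qed
      have "(a \<in> U \<and> b \<in> U \<and> a \<noteq> b)
           \<or> (a*a+a*b+b*b = a*b*(a+b) \<and> a*a+a*b+b*b \<noteq> 1) \<or> (a*a+a*b+b*b = 1 \<and> a*a+a*b+b*b \<noteq> a*b*(a+b))"
        using h unfolding offd_def E1_def E2_def by auto
      hence "nabla inv_swap01 a b = 4" using point(2)[OF two C] unfolding U_def W_def by simp
      hence "(a, b) \<in> S4" using C unfolding S4_def by simp
      thus "x \<in> S4" using xab by simp
    qed
  qed
  have dUE1: "offd U \<inter> E1 = {}"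
  proof (rule ccontr)
    assume "offd U \<inter> E1 \<noteq> {}"
    then obtain a b where h: "(a, b) \<in> offd U" "(a, b) \<in> E1" by auto
    hence "a*b*(a+b) \<noteq> 0 \<and> (a = 1 \<or> b = 1 \<or> a + b = 1) \<and> a*a+a*b+b*b = 0"
      using LW'[OF two, of a b] unfolding offd_def U_def W_def by simp
    moreover have "a*a+a*b+b*b = 1" using h(2) unfolding E1_def by simp
    ultimately show False by simp
  qed
  have dUE2: "offd U \<inter> E2 = {}"
  proof (rule ccontr)
    assume "offd U \<inter> E2 \<noteq> {}"
    then obtain a b where h: "(a, b) \<in> offd U" "(a, b) \<in> E2" by auto
    hence *: "a*b*(a+b) \<noteq> 0 \<and> (a = 1 \<or> b = 1 \<or> a + b = 1) \<and> a*a+a*b+b*b = 0"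
      using LW'[OF two, of a b] unfolding offd_def U_def W_def by simp
    moreover have "a*a+a*b+b*b = a*b*(a+b)" using h(2) unfolding E2_def by simp
    ultimately show False by auto
  qed
  have Deq: "D = S0 \<union> S4 \<union> S8"
  proof
    show "D \<subseteq> S0 \<union> S4 \<union> S8"
    proof (rule subsetI)
      fix x assume "x \<in> D"
      then obtain a b where xab: "x = (a, b)" and "(a, b) \<in> D" by (cases x) auto
      hence C: "a*b*(a+b) \<noteq> 0" unfolding D_def by simp
      hence "(a, b) \<in> S0 \<union> S4 \<union> S8" using point(3)[OF two C] unfolding S0_def S4_def S8_def by auto
      thus "x \<in> S0 \<union> S4 \<union> S8" using xab by simp
    qed
    show "S0 \<union> S4 \<union> S8 \<subseteq> D" unfolding S0_def S4_def S8_def D_def by auto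
  qed
  have D2: "D = offd (UNIV - {0})"
  proof -
    have "(a*b*(a+b) \<noteq> 0) = (a \<noteq> 0 \<and> b \<noteq> 0 \<and> a \<noteq> b)" for a b :: 'a
      using c2_eq[OF two, of a b] by simp
    thus ?thesis unfolding D_def offd_def by auto
  qed

  have fin: "finite (A :: ('a \<times> 'a) set)" for A by simp
  have cW: "card W = (if even n then 2 else 0)" unfolding W_def by (rule W_card[OF assms(2) assms(1)])
  have cR: "card R = (if 3 dvd n then 3 else 0)" unfolding R_def by (rule R_card[OF assms(2) assms(1)])
  have W01: "0 \<notin> W" "1 \<notin> W" unfolding W_def using c2_numeral[OF two] by simp_all
  have cU: "card U = card W + 1" unfolding U_def using W01 by simp
  have cT0: "card T0 + (card W + 2) = q"
  proof -
    define X where "X = insert (0::'a) (insert 1 W)"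
    have T0eq: "T0 = UNIV - X" unfolding T0_def W_def X_def by auto
    have cX: "card X = card W + 2" unfolding X_def using W01 by simp
    have "card T0 = card (UNIV::'a set) - card X" unfolding T0eq by (rule card_Diff_subset) simp_all
    moreover have "card X \<le> card (UNIV::'a set)" by (rule card_mono) simp_all
    ultimately show ?thesis using cX unfolding q_def by simp
  qed
  have cE1: "card E1 = card T0" unfolding E1_def T0_def by (rule E1_card[OF two])
  have cE2: "card E2 = card T0" unfolding E2_def T0_def by (rule E2_card[OF two])
  have coff: "card (offd S) + card S = card S * card S" for S
    unfolding offd_def by (rule card_offd) simp
  have cS4: "card S4 = card (offd U) + card (E2 - E1) + card (E1 - E2)"
  proof -
    have "card S4 = card (offd U \<union> (E2 - E1)) + card (E1 - E2)"
      unfolding S4eq by (rule card_Un_disjoint) (use dUE1 in auto)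
    also have "card (offd U \<union> (E2 - E1)) = card (offd U) + card (E2 - E1)"
      by (rule card_Un_disjoint) (use dUE2 in auto)
    finally show ?thesis .
  qed
  have cE21: "card (E2 - E1) + card (offd R) = card E2"
  proof -
    have "E2 = (E2 - E1) \<union> (E1 \<inter> E2)" by auto
    hence "card E2 = card ((E2 - E1) \<union> (E1 \<inter> E2))" by simp
    also have "\<dots> = card (E2 - E1) + card (E1 \<inter> E2)" by (rule card_Un_disjoint) auto
    finally show ?thesis using E12 by simp
  qed
  have cE12: "card (E1 - E2) + card (offd R) = card E1"
  proof -
    have "E1 = (E1 - E2) \<union> (E1 \<inter> E2)" by auto
    hence "card E1 = card ((E1 - E2) \<union> (E1 \<inter> E2))" by simp
    also have "\<dots> = card (E1 - E2) + card (E1 \<inter> E2)" by (rule card_Un_disjoint) auto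
    finally show ?thesis using E12 by simp
  qed
  have cD: "card D = card S0 + card S4 + card S8"
  proof -
    have d1: "S0 \<inter> S4 = {}" "S0 \<inter> S8 = {}" "S4 \<inter> S8 = {}" unfolding S0_def S4_def S8_def by auto
    have "card D = card (S0 \<union> S4) + card S8" unfolding Deq by (rule card_Un_disjoint) (use d1 in auto)
    also have "card (S0 \<union> S4) = card S0 + card S4" by (rule card_Un_disjoint) (use d1 in auto)
    finally show ?thesis .
  qed
  have cNZ: "card (UNIV - {0::'a}) + 1 = q" unfolding q_def
    using card_Suc_Diff1[of "UNIV::'a set" 0] by simp

  have iq: "(2::int) ^ n = int q" using q by simp
  have iq1: "(2::int) ^ (n + 1) = 2 * int q" using q by simp
  have iq2: "(2::int) ^ (2 * n) = int q * int q"
  proof -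
    have "(2::int) ^ (2 * n) = 2 ^ n * 2 ^ n" by (simp only: mult_2 power_add)
    thus ?thesis using iq by simp
  qed
  have q4: "q \<ge> 4"
  proof -
    have "(2::nat) ^ 2 \<le> 2 ^ n" by (rule power_increasing) (use assms(1) in auto)
    thus ?thesis using q by simp
  qed
  define p where "p = card (UNIV - {0::'a})"
  have hp: "int p = int q - 1" using cNZ unfolding p_def by simp
  have hD: "int (card D) = int q * int q - 3 * int q + 2"
  proof -
    have "int (card D) + int p = int p * int p" using coff[of "UNIV - {0}"] unfolding D2 p_def by (metis of_nat_add of_nat_mult)
    thus ?thesis unfolding hp by (simp add: algebra_simps)
  qed
  have h8: "int (card S8) = int (card R) * int (card R) - int (card R)"
    using coff[of R] unfolding S8eq by (metis add_diff_cancel_right' of_nat_add of_nat_mult)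
  have hU: "int (card (offd U)) = int (card U) * int (card U) - int (card U)"
    using coff[of U] by (metis add_diff_cancel_right' of_nat_add of_nat_mult)
  have hR: "int (card (offd R)) = int (card R) * int (card R) - int (card R)"
    using coff[of R] by (metis add_diff_cancel_right' of_nat_add of_nat_mult)
  have hT: "int (card T0) = int q - int (card W) - 2" using cT0 by simp
  have h4: "int (card S4) = int (card (offd U)) + int (card E2) - int (card (offd R)) + int (card E1) - int (card (offd R))"
    using cS4 cE21 cE12 by simp
  have h0: "int (card S0) = int (card D) - int (card S4) - int (card S8)" using cD by simp
  define w where "w = int (card W)"
  define r where "r = int (card R)"
  have e8: "int (card S8) = r*r - r" using h8 unfolding r_def .
  have e4: "int (card S4) = (w+1)*(w+1) - (w+1) + 2*(int q - w - 2) - 2*(r*r - r)"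
  proof -
    have u: "int (card U) = w + 1" using cU unfolding w_def by simp
    have "int (card S4) = int (card (offd U)) + int (card T0) - int (card (offd R)) + int (card T0) - int (card (offd R))"
      using h4 cE1 cE2 by simp
    also have "\<dots> = (w+1)*(w+1) - (w+1) + 2*(int q - w - 2) - 2*(r*r - r)"
      unfolding hU hR hT u by (simp add: w_def r_def)
    finally show ?thesis .
  qed
  have e0: "int (card S0) = int q * int q - 3 * int q + 2 - int (card S4) - int (card S8)"
    using h0 hD by simp
  have wv: "w = (if even n then 2 else 0)" unfolding w_def cW by simp
  have rv: "r = (if 3 dvd n then 3 else 0)" unfolding r_def cR by simp
  have iq4: "(4::int) ^ n = int q * int q" using iq2 by (simp add: power_mult)
  show ?thesis
  proof (cases "even n"; cases "3 dvd n")
    assume "even n" "3 dvd n"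
    hence "w = 2" "r = 3" using wv rv by simp_all
    thus ?thesis using e8 e4 e0 \<open>even n\<close> \<open>3 dvd n\<close> by (simp add: o0 o4 o8 iq iq1 iq2 iq4)
  next
    assume "even n" "\<not> 3 dvd n"
    hence "w = 2" "r = 0" using wv rv by simp_all
    thus ?thesis using e8 e4 e0 \<open>even n\<close> \<open>\<not> 3 dvd n\<close> by (simp add: o0 o4 o8 iq iq1 iq2 iq4)
  next
    assume "odd n" "3 dvd n"
    hence "w = 0" "r = 3" using wv rv by simp_all
    thus ?thesis using e8 e4 e0 \<open>odd n\<close> \<open>3 dvd n\<close> by (simp add: o0 o4 o8 iq iq1 iq2 iq4)
  next
    assume "odd n" "\<not> 3 dvd n"
    hence "w = 0" "r = 0" using wv rv by simp_all
    thus ?thesis using e8 e4 e0 \<open>odd n\<close> \<open>\<not> 3 dvd n\<close> by (simp add: o0 o4 o8 iq iq1 iq2 iq4)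
  qed
qed

end
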